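(* Let $P_1(t),\dots,P_J(t)$ be pairwise relatively prime reciprocal polynomials and $P(t)=\prod_{j=1}^JP_j(t)$. Then the canonical projections $\mathfrak{OA}/\mathfrak I_{P(t)}\to\mathfrak{OA}/\mathfrak I_{P_j(t)}$ induce a Lie algebra isomorphism $\mathfrak{OA}/\mathfrak I_{P(t)}\xrightarrow{\sim}\prod_{j=1}^J\mathfrak{OA}/\mathfrak I_{P_j(t)}$.
   Context: Work over $\mathbb C$. $\mathfrak{sl}_2$ has basis $e,f,h$ with $[e,f]=h$, $[h,e]=2e$, $[h,f]=-2f$. $L(\mathfrak{sl}_2)=\mathbb C[t,t^{-1}]\otimes\mathfrak{sl}_2$ is the loop algebra with bracket $[p(t)x,q(t)y]=p(t)q(t)[x,y]$. The Onsager algebra is the Lie subalgebra $\mathfrak{OA}=\{p(t)e+p(t^{-1})f+q(t)h:\ p,q\in\mathbb C[t,t^{-1}],\ q(t^{-1})=-q(t)\}$ of $L(\mathfrak{sl}_2)$. A reciprocal polynomial is a nonconstant monic $P\in\mathbb C[t]$ with $P(t)=\pm t^{\deg P}P(t^{-1})$. For a reciprocal polynomial $P$, $\mathfrak I_{P(t)}=\{p(t)e+p(t^{-1})f+q(t)h\in\mathfrak{OA}:\ p(t),q(t)\in P(t)\mathbb C[t,t^{-1}]\}$; it is an ideal of $\mathfrak{OA}$, and $\mathfrak I_{P}\subseteq\mathfrak I_Q$ when $Q\mid P$. *)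

theory Defs
  imports "HOL-Library.Poly_Mapping" "HOL-Library.FuncSet" "HOL-Computational_Algebra.Polynomial"
begin

text \<open>Laurent polynomials C[t,t^-1] as finitely supported functions int to complex;
  the convolution product of Poly_Mapping is the Laurent product.\<close>
type_synonym laurent = "int \<Rightarrow>\<^sub>0 complex"

definition lvar :: laurent where "lvar = Poly_Mapping.single 1 1"

definition lconst :: "complex \<Rightarrow> laurent" where "lconst c = Poly_Mapping.single 0 c"

definition linv :: "laurent \<Rightarrow> laurent" where
  "linv p = Abs_poly_mapping (\<lambda>n. Poly_Mapping.lookup p (- n))"

definition of_cpoly :: "complex poly \<Rightarrow> laurent" where
  "of_cpoly P = (\<Sum>i\<le>degree P. Poly_Mapping.single (int i) (coeff P i))"

definition reciprocal :: "complex poly \<Rightarrow> bool" where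
  "reciprocal P \<longleftrightarrow> degree P > 0 \<and> lead_coeff P = 1 \<and>
     (of_cpoly P = lvar ^ degree P * linv (of_cpoly P) \<or>
      of_cpoly P = - (lvar ^ degree P * linv (of_cpoly P)))"

text \<open>An element a e + b f + c h of the loop algebra L(sl2) is the triple (a,b,c).\<close>
type_synonym loopel = "laurent \<times> laurent \<times> laurent"

definition ladd :: "loopel \<Rightarrow> loopel \<Rightarrow> loopel" where
  "ladd x y = (case x of (a,b,c) \<Rightarrow> case y of (a',b',c') \<Rightarrow> (a+a', b+b', c+c'))"

definition lsmult :: "complex \<Rightarrow> loopel \<Rightarrow> loopel" where
  "lsmult s x = (case x of (a,b,c) \<Rightarrow> (lconst s * a, lconst s * b, lconst s * c))"

text \<open>[e,f]=h, [h,e]=2e, [h,f]=-2f, extended bilinearly over C[t,t^-1]\<close>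
definition lbracket :: "loopel \<Rightarrow> loopel \<Rightarrow> loopel" where
  "lbracket x y = (case x of (a,b,c) \<Rightarrow> case y of (a',b',c') \<Rightarrow>
     (2 * (c * a' - a * c'), 2 * (b * c' - c * b'), a * b' - b * a'))"

definition OA :: "loopel set" where
  "OA = {(p, linv p, q) | p q. linv q = - q}"

definition Iid :: "complex poly \<Rightarrow> loopel set" where
  "Iid P = {(p, linv p, q) | p q. (p, linv p, q) \<in> OA \<and>
      (\<exists>r. p = of_cpoly P * r) \<and> (\<exists>r. q = of_cpoly P * r)}"

definition coset :: "loopel \<Rightarrow> loopel set \<Rightarrow> loopel set" where
  "coset x I = ladd x ` I"

definition quot :: "loopel set \<Rightarrow> loopel set set" where
  "quot I = (\<lambda>x. coset x I) ` OA"

definition rep :: "loopel set \<Rightarrow> loopel" where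
  "rep X = (SOME x. x \<in> X)"

definition qadd :: "loopel set \<Rightarrow> loopel set \<Rightarrow> loopel set \<Rightarrow> loopel set" where
  "qadd I X Y = coset (ladd (rep X) (rep Y)) I"

definition qsmult :: "loopel set \<Rightarrow> complex \<Rightarrow> loopel set \<Rightarrow> loopel set" where
  "qsmult I s X = coset (lsmult s (rep X)) I"

definition qbracket :: "loopel set \<Rightarrow> loopel set \<Rightarrow> loopel set \<Rightarrow> loopel set" where
  "qbracket I X Y = coset (lbracket (rep X) (rep Y)) I"

end

theory Submission imports Defs "HOL-Computational_Algebra.Computational_Algebra" "HOL-Library.Product_Plus" "HOL-Computational_Algebra.Field_as_Ring"
begin

lemma lookup_linv: "Poly_Mapping.lookup (linv p) n = Poly_Mapping.lookup p (- n)"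
proof -
  have "finite {n. Poly_Mapping.lookup p (- n) \<noteq> 0}"
  proof -
    have "{n. Poly_Mapping.lookup p (- n) \<noteq> 0} = uminus ` {n. Poly_Mapping.lookup p n \<noteq> 0}"
      by (auto simp: image_iff) (metis minus_minus)
    then show ?thesis by simp
  qed
  then show ?thesis unfolding linv_def by simp
qed

lemma linv_add: "linv (p + q) = linv p + linv q"
  by (rule poly_mapping_eqI) (simp add: lookup_linv lookup_add)
lemma linv_uminus: "linv (- p) = - linv p"
  by (rule poly_mapping_eqI) (simp add: lookup_linv)
lemma linv_diff: "linv (p - q) = linv p - linv q"
  by (rule poly_mapping_eqI) (simp add: lookup_linv lookup_minus)
lemma linv_zero: "linv 0 = 0"
  by (rule poly_mapping_eqI) (simp add: lookup_linv)
lemma linv_linv: "linv (linv p) = p"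
  by (rule poly_mapping_eqI) (simp add: lookup_linv)
lemma linv_single: "linv (Poly_Mapping.single k c) = Poly_Mapping.single (-k) c"
  by (rule poly_mapping_eqI) (auto simp add: lookup_linv lookup_single when_def)
lemma linv_one: "linv 1 = 1"
  using linv_single[of 0 1] by simp
lemma linv_sum: "linv (sum f A) = (\<Sum>a\<in>A. linv (f a))"
  by (induction A rule: infinite_finite_induct) (auto simp: linv_zero linv_add)

lemma pm_decomp: "(p::laurent) = (\<Sum>k\<in>Poly_Mapping.keys p. Poly_Mapping.single k (Poly_Mapping.lookup p k))"
proof (rule poly_mapping_eqI)
  fix n
  show "Poly_Mapping.lookup p n = Poly_Mapping.lookup (\<Sum>k\<in>Poly_Mapping.keys p. Poly_Mapping.single k (Poly_Mapping.lookup p k)) n"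
    unfolding lookup_sum lookup_single
    by (cases "n \<in> Poly_Mapping.keys p") (auto simp: when_def in_keys_iff)
qed

lemma linv_mult: "linv (p * q) = linv p * linv q"
proof -
  have "p * q = (\<Sum>a\<in>Poly_Mapping.keys p. \<Sum>b\<in>Poly_Mapping.keys q.
     Poly_Mapping.single a (Poly_Mapping.lookup p a) * Poly_Mapping.single b (Poly_Mapping.lookup q b))"
    by (subst pm_decomp[of p], subst pm_decomp[of q]) (simp add: sum_product)
  moreover have "linv p * linv q = (\<Sum>a\<in>Poly_Mapping.keys p. \<Sum>b\<in>Poly_Mapping.keys q.
     linv (Poly_Mapping.single a (Poly_Mapping.lookup p a)) * linv (Poly_Mapping.single b (Poly_Mapping.lookup q b)))"
    by (subst pm_decomp[of p], subst pm_decomp[of q]) (simp add: sum_product linv_sum)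
  ultimately show ?thesis
    by (simp add: linv_sum linv_single mult_single)
qed

lemma lconst_add: "lconst (a + b) = lconst a + lconst b"
  by (simp add: lconst_def single_add)
lemma lconst_mult: "lconst (a * b) = lconst a * lconst b"
  by (simp add: lconst_def mult_single)
lemma lconst_one: "lconst 1 = 1"
  by (simp add: lconst_def)
lemma linv_lconst: "linv (lconst c) = lconst c"
  by (simp add: lconst_def linv_single)
lemma linv_two: "linv 2 = 2"
  by (metis linv_add linv_one one_add_one)

lemma lookup_of_cpoly: "Poly_Mapping.lookup (of_cpoly P) n = (if n \<ge> 0 then coeff P (nat n) else 0)"
proof -
  have "Poly_Mapping.lookup (of_cpoly P) n = (\<Sum>i\<le>degree P. (coeff P i when int i = n))"
    unfolding of_cpoly_def lookup_sum lookup_single by simp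
  also have "\<dots> = (if n \<ge> 0 then coeff P (nat n) else 0)"
  proof (cases "n \<ge> 0 \<and> nat n \<le> degree P")
    case True
    then have "(\<Sum>i\<le>degree P. (coeff P i when int i = n)) = (\<Sum>i\<in>{nat n}. (coeff P i when int i = n))"
      by (intro sum.mono_neutral_right) (auto simp: when_def)
    then show ?thesis using True by (simp add: when_def)
  next
    case False
    then have "(\<Sum>i\<le>degree P. (coeff P i when int i = n)) = 0"
      by (intro sum.neutral) (auto simp: when_def)
    then show ?thesis using False by (auto simp: coeff_eq_0)
  qed
  finally show ?thesis .
qed

lemma of_cpoly_add: "of_cpoly (P + Q) = of_cpoly P + of_cpoly Q"
  by (rule poly_mapping_eqI) (simp add: lookup_of_cpoly lookup_add)
lemma of_cpoly_zero: "of_cpoly 0 = 0" by (simp add: of_cpoly_def)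
lemma of_cpoly_sum: "of_cpoly (sum f A) = (\<Sum>a\<in>A. of_cpoly (f a))"
  by (induction A rule: infinite_finite_induct) (auto simp: of_cpoly_add of_cpoly_zero)
lemma of_cpoly_monom: "of_cpoly (monom c k) = Poly_Mapping.single (int k) c"
  by (rule poly_mapping_eqI) (auto simp add: lookup_of_cpoly lookup_single when_def coeff_monom)
lemma of_cpoly_one: "of_cpoly 1 = 1"
  using of_cpoly_monom[of 1 0] by (simp add: monom_0 one_pCons)
lemma of_cpoly_mult: "of_cpoly (P * Q) = of_cpoly P * of_cpoly Q"
proof -
  have "P * Q = (\<Sum>i\<le>degree P. \<Sum>j\<le>degree Q. monom (coeff P i) i * monom (coeff Q j) j)"
    by (subst poly_as_sum_of_monoms[symmetric, of P], subst poly_as_sum_of_monoms[symmetric, of Q])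
       (simp add: sum_product)
  then have "of_cpoly (P * Q) = (\<Sum>i\<le>degree P. \<Sum>j\<le>degree Q. Poly_Mapping.single (int i) (coeff P i) * Poly_Mapping.single (int j) (coeff Q j))"
    by (simp add: of_cpoly_sum mult_monom of_cpoly_monom mult_single)
  then show ?thesis by (simp add: of_cpoly_def sum_product)
qed

lemma lvar_pow: "lvar ^ n = Poly_Mapping.single (int n) 1"
  by (induction n) (simp_all add: lvar_def mult_single add.commute)

definition symdiv :: "laurent \<Rightarrow> bool" where "symdiv A \<longleftrightarrow> (\<exists>u. linv A = u * A)"

lemma symdiv_recip: assumes "reciprocal P" shows "symdiv (of_cpoly P)"
proof -
  define d where "d = degree P"
  define w :: laurent where "w = Poly_Mapping.single (- int d) 1"
  have w: "w * lvar ^ d = 1" by (simp add: w_def lvar_pow mult_single)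
  from assms consider "of_cpoly P = lvar ^ d * linv (of_cpoly P)" | "of_cpoly P = - (lvar ^ d * linv (of_cpoly P))"
    unfolding reciprocal_def d_def by blast
  then show ?thesis
  proof cases
    case 1
    then have "w * of_cpoly P = w * (lvar ^ d * linv (of_cpoly P))" by (rule arg_cong)
    then have "w * of_cpoly P = linv (of_cpoly P)" by (simp add: mult.assoc[symmetric] w)
    then show ?thesis unfolding symdiv_def by metis
  next
    case 2
    then have "(- w) * of_cpoly P = (- w) * (- (lvar ^ d * linv (of_cpoly P)))" by (rule arg_cong)
    then have "(- w) * of_cpoly P = linv (of_cpoly P)" by (simp add: mult.assoc[symmetric] w)
    then show ?thesis unfolding symdiv_def by metis
  qed
qed

lemma symdiv_one: "symdiv 1" unfolding symdiv_def by (rule exI[of _ 1]) (simp add: linv_one)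
lemma symdiv_mult: "symdiv A \<Longrightarrow> symdiv B \<Longrightarrow> symdiv (A * B)"
  unfolding symdiv_def by (auto simp: linv_mult)
lemma symdiv_prod: "(\<And>j. j \<in> S \<Longrightarrow> symdiv (f j)) \<Longrightarrow> symdiv (\<Prod>j\<in>S. f j)"
  by (induction S rule: infinite_finite_induct) (auto simp: symdiv_one symdiv_mult)
lemma symdiv_dvd: "symdiv A \<Longrightarrow> A dvd p \<Longrightarrow> A dvd linv p"
  unfolding symdiv_def by (auto simp: linv_mult dvd_def)

lemma of_cpoly_dvd: "A dvd B \<Longrightarrow> of_cpoly A dvd of_cpoly B"
  by (auto simp: dvd_def of_cpoly_mult)

lemma bezout_poly: fixes A B :: "complex poly" assumes "coprime A B" shows "\<exists>a b. a * A + b * B = 1"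
  using bezout_coefficients_fst_snd[of A B] assms by (auto simp: coprime_iff_gcd_eq_1)

lemma bezout_dvd: fixes A B :: "'a::comm_ring_1"
  assumes "a * A + b * B = 1" "A dvd p" "B dvd p" shows "A * B dvd p"
proof -
  obtain r where r: "p = A * r" using assms(2) by (rule dvdE)
  obtain s where s: "p = B * s" using assms(3) by (rule dvdE)
  have "p = (a * A + b * B) * p" using assms by simp
  also have "\<dots> = A * B * (a * s + b * r)"
    by (simp add: algebra_simps) (metis r s mult.assoc mult.commute mult.left_commute)
  finally show ?thesis by simp
qed

lemma ladd_eq: "ladd x y = x + y"
  by (cases x; cases y) (simp add: ladd_def)

lemma OA_iff [simp]: "(a, b, c) \<in> OA \<longleftrightarrow> b = linv a \<and> linv c = - c"
  unfolding OA_def by auto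

definition II :: "laurent \<Rightarrow> loopel set" where
  "II A = {x \<in> OA. A dvd fst x \<and> A dvd snd (snd x)}"

lemma Iid_II: "Iid P = II (of_cpoly P)"
  unfolding Iid_def II_def by (auto simp: dvd_def OA_def)

lemma II_iff [simp]: "(a, b, c) \<in> II A \<longleftrightarrow> (a, b, c) \<in> OA \<and> A dvd a \<and> A dvd c"
  unfolding II_def by auto

lemma OA_add: "x \<in> OA \<Longrightarrow> y \<in> OA \<Longrightarrow> x + y \<in> OA"
  by (cases x; cases y) (auto simp: linv_add)
lemma OA_diff: "x \<in> OA \<Longrightarrow> y \<in> OA \<Longrightarrow> x - y \<in> OA"
  by (cases x; cases y) (auto simp: linv_diff)
lemma OA_zero: "0 \<in> OA"
  by (simp add: zero_prod_def linv_zero)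
lemma OA_smult: "x \<in> OA \<Longrightarrow> lsmult s x \<in> OA"
  by (cases x) (auto simp: lsmult_def linv_mult linv_lconst)
lemma OA_bracket: "x \<in> OA \<Longrightarrow> y \<in> OA \<Longrightarrow> lbracket x y \<in> OA"
  by (cases x; cases y) (auto simp: lbracket_def linv_mult linv_diff linv_linv linv_two algebra_simps)

lemma II_OA: "x \<in> II A \<Longrightarrow> x \<in> OA" unfolding II_def by auto
lemma II_add: "x \<in> II A \<Longrightarrow> y \<in> II A \<Longrightarrow> x + y \<in> II A"
  by (cases x; cases y) (auto simp: linv_add)
lemma II_diff: "x \<in> II A \<Longrightarrow> y \<in> II A \<Longrightarrow> x - y \<in> II A"
  by (cases x; cases y) (auto simp: linv_diff)
lemma II_zero: "0 \<in> II A"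
  by (simp add: zero_prod_def linv_zero)
lemma II_smult: "x \<in> II A \<Longrightarrow> lsmult s x \<in> II A"
  by (cases x) (auto simp: lsmult_def linv_mult linv_lconst)
lemma II_bracket: "symdiv A \<Longrightarrow> x \<in> OA \<Longrightarrow> y \<in> II A \<Longrightarrow> lbracket x y \<in> II A"
proof (cases x; cases y)
  fix a b c a' b' c'
  assume s: "symdiv A" and x: "x \<in> OA" and y: "y \<in> II A" and xe: "x = (a,b,c)" and ye: "y = (a',b',c')"
  have "lbracket x y \<in> OA" using x y II_OA OA_bracket by blast
  moreover have "A dvd a'" "A dvd c'" "A dvd linv a'" using y ye symdiv_dvd[OF s] by auto
  ultimately show ?thesis using xe ye x y by (auto simp: lbracket_def)
qed
lemma II_mono: "A dvd B \<Longrightarrow> II B \<subseteq> II A"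
  unfolding II_def using dvd_trans by blast

lemma lbracket_anti: "lbracket x y = - lbracket y x"
  by (cases x; cases y) (auto simp: lbracket_def algebra_simps)
lemma lbracket_diff_left: "lbracket (x - y) z = lbracket x z - lbracket y z"
  by (cases x; cases y; cases z) (auto simp: lbracket_def algebra_simps)
lemma lbracket_diff_right: "lbracket z (x - y) = lbracket z x - lbracket z y"
  by (cases x; cases y; cases z) (auto simp: lbracket_def algebra_simps)
lemma lsmult_diff: "lsmult s x - lsmult s y = lsmult s (x - y)"
  by (cases x; cases y) (auto simp: lsmult_def algebra_simps)

lemma II_uminus: "x \<in> II A \<Longrightarrow> - x \<in> II A"
  using II_diff[OF II_zero] by (metis diff_0)

lemma coset_eq: assumes "x - y \<in> II A" shows "coset x (II A) = coset y (II A)"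
proof -
  have "coset x (II A) \<subseteq> coset y (II A)" if "x - y \<in> II A" for x y
  proof
    fix z assume "z \<in> coset x (II A)"
    then obtain i where i: "i \<in> II A" "z = x + i" by (auto simp: coset_def ladd_eq)
    have "z = y + ((x - y) + i)" using i by (simp add: algebra_simps)
    moreover have "(x - y) + i \<in> II A" using II_add that i by blast
    ultimately show "z \<in> coset y (II A)" unfolding coset_def ladd_eq by (intro image_eqI[of z "(+) y" "(x-y)+i"])
  qed
  moreover have "y - x \<in> II A" using II_uminus[OF assms] by simp
  ultimately show ?thesis using assms by blast
qed

lemma self_in_coset: "x \<in> coset x (II A)"
  unfolding coset_def ladd_eq by (rule image_eqI[of _ _ 0]) (simp_all add: II_zero)

lemma coset_eqD: assumes "coset x (II A) = coset y (II A)" shows "x - y \<in> II A"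
proof -
  have "x \<in> coset y (II A)" using self_in_coset[of x A] unfolding assms .
  then obtain i where "i \<in> II A" "x = y + i" by (auto simp: coset_def ladd_eq)
  then show ?thesis by simp
qed

lemma rep_coset: "rep (coset x (II A)) - x \<in> II A"
proof -
  have "rep (coset x (II A)) \<in> coset x (II A)" unfolding rep_def by (rule someI[of "\<lambda>z. z \<in> coset x (II A)", OF self_in_coset])
  then obtain i where "i \<in> II A" "rep (coset x (II A)) = x + i" by (auto simp: coset_def ladd_eq)
  then show ?thesis by simp
qed

lemma rep_OA: assumes "x \<in> OA" shows "rep (coset x (II A)) \<in> OA"
proof -
  have "rep (coset x (II A)) = x + (rep (coset x (II A)) - x)" by simp
  also have "\<dots> \<in> OA" by (rule OA_add[OF assms II_OA[OF rep_coset]])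
  finally show ?thesis .
qed

lemma coset_rep: "coset (rep (coset x (II A))) (II A) = coset x (II A)"
  using coset_eq[OF rep_coset] .

lemma cong_add: "a' - a \<in> II A \<Longrightarrow> b' - b \<in> II A \<Longrightarrow> (a' + b') - (a + b) \<in> II A"
  using II_add[of "a' - a" A "b' - b"] by (simp add: algebra_simps)
lemma cong_smult: "a' - a \<in> II A \<Longrightarrow> lsmult s a' - lsmult s a \<in> II A"
  by (simp add: lsmult_diff II_smult)
lemma cong_bracket: assumes "symdiv A" "a \<in> OA" "b' \<in> OA" "a' - a \<in> II A" "b' - b \<in> II A"
  shows "lbracket a' b' - lbracket a b \<in> II A"
proof -
  have "lbracket a' b' - lbracket a b = lbracket (a' - a) b' + lbracket a (b' - b)"
    by (simp add: lbracket_diff_left lbracket_diff_right algebra_simps)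
  also have "lbracket (a' - a) b' = - lbracket b' (a' - a)" by (rule lbracket_anti)
  finally have e: "lbracket a' b' - lbracket a b = - lbracket b' (a' - a) + lbracket a (b' - b)" .
  have "lbracket b' (a' - a) \<in> II A" by (rule II_bracket[OF assms(1,3,4)])
  moreover have "lbracket a (b' - b) \<in> II A" by (rule II_bracket[OF assms(1,2,5)])
  ultimately show ?thesis unfolding e by (intro II_add II_uminus)
qed

lemma of_cpoly_prod: "of_cpoly (prod f S) = (\<Prod>j\<in>S. of_cpoly (f j))"
  by (induction S rule: infinite_finite_induct) (auto simp: of_cpoly_mult of_cpoly_one)

lemma crt_inj:
  fixes S :: "nat set"
  assumes "finite S" "\<And>i j. i \<in> S \<Longrightarrow> j \<in> S \<Longrightarrow> i \<noteq> j \<Longrightarrow> coprime (Ps i) (Ps j)"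
    "\<And>j. j \<in> S \<Longrightarrow> of_cpoly (Ps j) dvd p"
  shows "of_cpoly (\<Prod>j\<in>S. Ps j) dvd p"
  using assms
proof (induction S rule: finite_induct)
  case empty
  then show ?case by (simp add: of_cpoly_one)
next
  case (insert x F)
  have "coprime (Ps x) (\<Prod>j\<in>F. Ps j)"
    by (rule prod_coprime_right) (use insert in auto)
  then obtain a b where "a * Ps x + b * (\<Prod>j\<in>F. Ps j) = 1" using bezout_poly by blast
  then have "of_cpoly a * of_cpoly (Ps x) + of_cpoly b * of_cpoly (\<Prod>j\<in>F. Ps j) = 1"
    by (metis of_cpoly_add of_cpoly_mult of_cpoly_one)
  moreover have "of_cpoly (\<Prod>j\<in>F. Ps j) dvd p" using insert by auto
  ultimately have "of_cpoly (Ps x) * of_cpoly (\<Prod>j\<in>F. Ps j) dvd p"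
    using bezout_dvd insert by blast
  then show ?case using insert by (simp add: of_cpoly_mult)
qed

lemma crt_comb:
  fixes J k :: nat and E f :: "nat \<Rightarrow> 'a::comm_ring_1"
  assumes "k < J" "A dvd (E k - 1)" "\<And>j. j < J \<Longrightarrow> j \<noteq> k \<Longrightarrow> A dvd E j"
  shows "A dvd ((\<Sum>j<J. E j * f j) - f k)"
proof -
  have "(\<Sum>j<J. E j * f j) = E k * f k + (\<Sum>j\<in>{..<J}-{k}. E j * f j)"
    using assms(1) by (simp add: sum.remove)
  then have "(\<Sum>j<J. E j * f j) - f k = (E k - 1) * f k + (\<Sum>j\<in>{..<J}-{k}. E j * f j)"
    by (simp add: algebra_simps)
  moreover have "A dvd (\<Sum>j\<in>{..<J}-{k}. E j * f j)"
    by (rule dvd_sum) (use assms(3) in auto)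
  ultimately show ?thesis using assms(2) by (simp add: dvd_add)
qed

lemma crt_idem:
  fixes J j :: nat
  assumes "\<And>i j. i < J \<Longrightarrow> j < J \<Longrightarrow> i \<noteq> j \<Longrightarrow> coprime (Ps i) (Ps j)" "j < J"
  shows "\<exists>E. of_cpoly (Ps j) dvd (E - 1) \<and> (\<forall>i<J. i \<noteq> j \<longrightarrow> of_cpoly (Ps i) dvd E)"
proof -
  define Q where "Q = (\<Prod>i\<in>{..<J}-{j}. Ps i)"
  have "coprime (Ps j) Q" unfolding Q_def
    by (rule prod_coprime_right) (use assms in auto)
  then obtain a b where ab: "a * Ps j + b * Q = 1" using bezout_poly by blast
  then have "of_cpoly a * of_cpoly (Ps j) + of_cpoly (b * Q) = 1"
    by (metis of_cpoly_add of_cpoly_mult of_cpoly_one)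
  then have "of_cpoly (b * Q) - 1 = of_cpoly (Ps j) * (- of_cpoly a)"
    by (simp add: algebra_simps)
  moreover have "of_cpoly (Ps i) dvd of_cpoly (b * Q)" if "i < J" "i \<noteq> j" for i
  proof -
    have "Ps i dvd Q" unfolding Q_def by (rule dvd_prodI) (use that in auto)
    then show ?thesis by (intro of_cpoly_dvd) simp
  qed
  ultimately show ?thesis by (intro exI[of _ "of_cpoly (b * Q)"]) (auto intro: dvdI)
qed

lemma crt_surj:
  fixes J :: nat
  assumes recip: "\<And>j. j < J \<Longrightarrow> reciprocal (Ps j)"
    and coprime: "\<And>i j. i < J \<Longrightarrow> j < J \<Longrightarrow> i \<noteq> j \<Longrightarrow> coprime (Ps i) (Ps j)"
    and xs: "\<And>j. j < J \<Longrightarrow> xs j \<in> OA"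
  shows "\<exists>x\<in>OA. \<forall>j<J. x - xs j \<in> II (of_cpoly (Ps j))"
proof -
  have "\<forall>j\<in>{..<J}. \<exists>E. of_cpoly (Ps j) dvd (E - 1) \<and> (\<forall>i<J. i \<noteq> j \<longrightarrow> of_cpoly (Ps i) dvd E)"
    by (intro ballI crt_idem[OF coprime]) simp_all
  from bchoice[OF this] obtain E where E0: "\<forall>j\<in>{..<J}. of_cpoly (Ps j) dvd (E j - 1) \<and> (\<forall>i<J. i \<noteq> j \<longrightarrow> of_cpoly (Ps i) dvd E j)"
    by blast
  have E: "\<And>j. j < J \<Longrightarrow> of_cpoly (Ps j) dvd (E j - 1)"
    "\<And>i j. j < J \<Longrightarrow> i < J \<Longrightarrow> i \<noteq> j \<Longrightarrow> of_cpoly (Ps i) dvd E j"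
    using E0 by auto
  define p where "p = (\<Sum>j<J. E j * fst (xs j))"
  define q' where "q' = (\<Sum>j<J. E j * snd (snd (xs j)))"
  define h where "h = lconst (1/2)"
  define q where "q = h * (q' - linv q')"
  have "lconst (1/2) + lconst (1/2) = lconst (1/2 + 1/2)" by (simp only: lconst_add)
  then have hh: "h + h = 1" unfolding h_def by (simp add: lconst_one)
  have "linv q = h * (linv q' - q')"
    by (simp add: q_def h_def linv_mult linv_lconst linv_diff linv_linv)
  also have "\<dots> = - q" by (simp add: q_def algebra_simps)
  finally have xOA: "(p, linv p, q) \<in> OA" by simp
  have "(p, linv p, q) - xs k \<in> II (of_cpoly (Ps k))" if k: "k < J" for k
  proof -
    obtain a b c where xk: "xs k = (a, b, c)" by (cases "xs k")
    have bc: "b = linv a" "linv c = - c" using xs[OF k] xk by auto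
    have d1: "of_cpoly (Ps k) dvd (p - a)"
      unfolding p_def using crt_comb[of k J "of_cpoly (Ps k)" E "\<lambda>j. fst (xs j)"] E k xk by auto
    have d2: "of_cpoly (Ps k) dvd (q' - c)"
      unfolding q'_def using crt_comb[of k J "of_cpoly (Ps k)" E "\<lambda>j. snd (snd (xs j))"] E k xk by auto
    have hc: "h * c + h * c = c" using hh by (metis distrib_right mult_1_left)
    have "q - c = h * (q' - linv q') - (h * c + h * c)" by (simp only: hc q_def)
    also have "\<dots> = h * (q' - c) - h * linv (q' - c)"
      by (simp add: linv_diff bc algebra_simps)
    finally have "q - c = h * (q' - c) - h * linv (q' - c)" .
    moreover have "of_cpoly (Ps k) dvd linv (q' - c)"
      using symdiv_dvd[OF symdiv_recip[OF recip[OF k]] d2] .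
    ultimately have d3: "of_cpoly (Ps k) dvd (q - c)" using d2 by (simp add: dvd_diff dvd_mult)
    have "(p, linv p, q) - xs k \<in> OA" using OA_diff[OF xOA xs[OF k]] .
    then show ?thesis using xk d1 d3 by simp
  qed
  then show ?thesis using xOA by blast
qed

lemma qadd_hom: "qadd (II A) (coset a (II A)) (coset b (II A)) = coset (a + b) (II A)"
  unfolding qadd_def ladd_eq by (rule coset_eq, rule cong_add; rule rep_coset)
lemma qsmult_hom: "qsmult (II A) s (coset a (II A)) = coset (lsmult s a) (II A)"
  unfolding qsmult_def by (rule coset_eq, rule cong_smult, rule rep_coset)
lemma qbracket_hom: "symdiv A \<Longrightarrow> a \<in> OA \<Longrightarrow> b \<in> OA \<Longrightarrow>
   qbracket (II A) (coset a (II A)) (coset b (II A)) = coset (lbracket a b) (II A)"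
  unfolding qbracket_def by (rule coset_eq, rule cong_bracket; (rule rep_coset | rule rep_OA | assumption))

theorem lemma1:
  fixes J :: nat and Ps :: "nat \<Rightarrow> complex poly"
  assumes recip: "\<And>j. j < J \<Longrightarrow> reciprocal (Ps j)"
    and coprime: "\<And>i j. i < J \<Longrightarrow> j < J \<Longrightarrow> i \<noteq> j \<Longrightarrow> coprime (Ps i) (Ps j)"
  defines "P \<equiv> (\<Prod>j<J. Ps j)"
  shows "\<exists>\<phi>. (\<forall>x\<in>OA. \<phi> (coset x (Iid P)) = (\<lambda>j\<in>{..<J}. coset x (Iid (Ps j))))
    \<and> bij_betw \<phi> (quot (Iid P)) (\<Pi>\<^sub>E j\<in>{..<J}. quot (Iid (Ps j)))
    \<and> (\<forall>X\<in>quot (Iid P). \<forall>Y\<in>quot (Iid P).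
          \<phi> (qadd (Iid P) X Y) = (\<lambda>j\<in>{..<J}. qadd (Iid (Ps j)) (\<phi> X j) (\<phi> Y j)))
    \<and> (\<forall>s. \<forall>X\<in>quot (Iid P).
          \<phi> (qsmult (Iid P) s X) = (\<lambda>j\<in>{..<J}. qsmult (Iid (Ps j)) s (\<phi> X j)))
    \<and> (\<forall>X\<in>quot (Iid P). \<forall>Y\<in>quot (Iid P).
          \<phi> (qbracket (Iid P) X Y) = (\<lambda>j\<in>{..<J}. qbracket (Iid (Ps j)) (\<phi> X j) (\<phi> Y j)))"
proof -
  define IP where "IP = II (of_cpoly P)"
  define Ij where "Ij j = II (of_cpoly (Ps j))" for j
  have sdj: "\<And>j. j < J \<Longrightarrow> symdiv (of_cpoly (Ps j))" using symdiv_recip recip by blast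
  have sub: "\<And>j. j < J \<Longrightarrow> IP \<subseteq> Ij j"
    unfolding IP_def Ij_def P_def by (intro II_mono of_cpoly_dvd dvd_prodI) auto
  define \<phi> where "\<phi> X = (\<lambda>j\<in>{..<J}. coset (rep X) (Ij j))" for X
  have key: "\<phi> (coset x IP) = (\<lambda>j\<in>{..<J}. coset x (Ij j))" for x
    unfolding \<phi>_def
  proof (rule restrict_ext)
    fix j assume "j \<in> {..<J}"
    then have "rep (coset x IP) - x \<in> Ij j" using sub rep_coset unfolding IP_def by blast
    then show "coset (rep (coset x IP)) (Ij j) = coset x (Ij j)" unfolding Ij_def by (rule coset_eq)
  qed
  have repOA: "X \<in> quot IP \<Longrightarrow> rep X \<in> OA" for X
    unfolding quot_def IP_def using rep_OA by blast
  have repC: "X \<in> quot IP \<Longrightarrow> X = coset (rep X) IP" for X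
    unfolding quot_def IP_def using coset_rep by (metis imageE)
  have phij: "j < J \<Longrightarrow> \<phi> X j = coset (rep X) (Ij j)" for X j
    unfolding \<phi>_def by simp
  have P1: "\<forall>x\<in>OA. \<phi> (coset x IP) = (\<lambda>j\<in>{..<J}. coset x (Ij j))" using key by blast
  have P3: "\<forall>X\<in>quot IP. \<forall>Y\<in>quot IP. \<phi> (qadd IP X Y) = (\<lambda>j\<in>{..<J}. qadd (Ij j) (\<phi> X j) (\<phi> Y j))"
  proof (intro ballI)
    fix X Y assume X: "X \<in> quot IP" and Y: "Y \<in> quot IP"
    have "\<phi> (qadd IP X Y) = (\<lambda>j\<in>{..<J}. coset (rep X + rep Y) (Ij j))"
      unfolding qadd_def ladd_eq key ..
    also have "\<dots> = (\<lambda>j\<in>{..<J}. qadd (Ij j) (\<phi> X j) (\<phi> Y j))"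
      by (rule restrict_ext) (simp add: phij Ij_def qadd_hom)
    finally show "\<phi> (qadd IP X Y) = (\<lambda>j\<in>{..<J}. qadd (Ij j) (\<phi> X j) (\<phi> Y j))" .
  qed
  have P4: "\<forall>s. \<forall>X\<in>quot IP. \<phi> (qsmult IP s X) = (\<lambda>j\<in>{..<J}. qsmult (Ij j) s (\<phi> X j))"
  proof (intro allI ballI)
    fix s X assume X: "X \<in> quot IP"
    have "\<phi> (qsmult IP s X) = (\<lambda>j\<in>{..<J}. coset (lsmult s (rep X)) (Ij j))"
      unfolding qsmult_def key ..
    also have "\<dots> = (\<lambda>j\<in>{..<J}. qsmult (Ij j) s (\<phi> X j))"
      by (rule restrict_ext) (simp add: phij Ij_def qsmult_hom)
    finally show "\<phi> (qsmult IP s X) = (\<lambda>j\<in>{..<J}. qsmult (Ij j) s (\<phi> X j))" .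
  qed
  have P5: "\<forall>X\<in>quot IP. \<forall>Y\<in>quot IP. \<phi> (qbracket IP X Y) = (\<lambda>j\<in>{..<J}. qbracket (Ij j) (\<phi> X j) (\<phi> Y j))"
  proof (intro ballI)
    fix X Y assume X: "X \<in> quot IP" and Y: "Y \<in> quot IP"
    have "\<phi> (qbracket IP X Y) = (\<lambda>j\<in>{..<J}. coset (lbracket (rep X) (rep Y)) (Ij j))"
      unfolding qbracket_def key ..
    also have "\<dots> = (\<lambda>j\<in>{..<J}. qbracket (Ij j) (\<phi> X j) (\<phi> Y j))"
    proof (rule restrict_ext)
      fix j assume j: "j \<in> {..<J}"
      then show "coset (lbracket (rep X) (rep Y)) (Ij j) = qbracket (Ij j) (\<phi> X j) (\<phi> Y j)"
        using qbracket_hom[OF sdj repOA[OF X] repOA[OF Y]] by (simp add: phij Ij_def)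
    qed
    finally show "\<phi> (qbracket IP X Y) = (\<lambda>j\<in>{..<J}. qbracket (Ij j) (\<phi> X j) (\<phi> Y j))" .
  qed
  have inj: "inj_on \<phi> (quot IP)"
  proof (rule inj_onI)
    fix X Y assume X: "X \<in> quot IP" and Y: "Y \<in> quot IP" and e: "\<phi> X = \<phi> Y"
    define d where "d = rep X - rep Y"
    have dj: "d \<in> Ij j" if j: "j < J" for j
    proof -
      have "coset (rep X) (Ij j) = coset (rep Y) (Ij j)" using e phij[OF j] by metis
      then show ?thesis unfolding d_def Ij_def by (rule coset_eqD)
    qed
    obtain a b c where dabc: "d = (a, b, c)" by (cases d)
    have dOA: "d \<in> OA" unfolding d_def using OA_diff repOA X Y by blast
    have "of_cpoly P dvd a" unfolding P_def
      by (rule crt_inj) (use coprime dj dabc Ij_def in auto)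
    moreover have "of_cpoly P dvd c" unfolding P_def
      by (rule crt_inj) (use coprime dj dabc Ij_def in auto)
    ultimately have "d \<in> IP" using dOA dabc unfolding IP_def by simp
    then have "coset (rep X) IP = coset (rep Y) IP" unfolding d_def IP_def by (rule coset_eq)
    then show "X = Y" using repC X Y by metis
  qed
  have img: "\<phi> ` quot IP = (\<Pi>\<^sub>E j\<in>{..<J}. quot (Ij j))"
  proof
    show "\<phi> ` quot IP \<subseteq> (\<Pi>\<^sub>E j\<in>{..<J}. quot (Ij j))"
    proof
      fix F assume "F \<in> \<phi> ` quot IP"
      then obtain X where X: "X \<in> quot IP" "F = \<phi> X" by blast
      have "coset (rep X) (Ij j) \<in> quot (Ij j)" for j
        unfolding quot_def using repOA[OF X(1)] by blast
      then show "F \<in> (\<Pi>\<^sub>E j\<in>{..<J}. quot (Ij j))" unfolding X(2) \<phi>_def by simp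
    qed
  next
    show "(\<Pi>\<^sub>E j\<in>{..<J}. quot (Ij j)) \<subseteq> \<phi> ` quot IP"
    proof
      fix F assume F: "F \<in> (\<Pi>\<^sub>E j\<in>{..<J}. quot (Ij j))"
      have "\<forall>j\<in>{..<J}. \<exists>x. x \<in> OA \<and> F j = coset x (Ij j)"
        using F unfolding quot_def PiE_iff image_iff by blast
      from bchoice[OF this] obtain xs where xs: "\<forall>j\<in>{..<J}. xs j \<in> OA \<and> F j = coset (xs j) (Ij j)"
        by blast
      have "\<exists>x\<in>OA. \<forall>j<J. x - xs j \<in> II (of_cpoly (Ps j))"
        by (rule crt_surj[where J=J and Ps=Ps and xs=xs]) (use recip coprime xs in auto)
      then obtain x where x: "x \<in> OA" "\<forall>j<J. x - xs j \<in> II (of_cpoly (Ps j))"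
        by blast
      have "\<phi> (coset x IP) = (\<lambda>j\<in>{..<J}. coset x (Ij j))" by (rule key)
      also have "\<dots> = (\<lambda>j\<in>{..<J}. F j)"
        by (rule restrict_ext) (use x xs coset_eq Ij_def in auto)
      also have "\<dots> = F" using F by (simp add: PiE_restrict)
      finally have "F = \<phi> (coset x IP)" by simp
      moreover have "coset x IP \<in> quot IP" unfolding quot_def using x by blast
      ultimately show "F \<in> \<phi> ` quot IP" by blast
    qed
  qed
  have "bij_betw \<phi> (quot IP) (\<Pi>\<^sub>E j\<in>{..<J}. quot (Ij j))"
    unfolding bij_betw_def using inj img by blast
  then show ?thesis unfolding Iid_II IP_def[symmetric] Ij_def[symmetric]
    using P1 P3 P4 P5 by blast
qed

end
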